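(* Let $\mathbb{X},\mathbb{Y},\mathbb{Z}$ be finite-dimensional real Euclidean spaces, $f_1:\mathbb{Y}\to(-\infty,+\infty]$ and $f_2:\mathbb{Z}\to(-\infty,+\infty]$ proper closed convex functions, $B_1:\mathbb{Y}\to\mathbb{X}$, $B_2:\mathbb{Z}\to\mathbb{X}$ linear, $c\in\mathbb{X}$, $\sigma>0$, and consider the problem $\min\{f_1(y)+f_2(z): B_1y+B_2z=c\}$ with augmented Lagrangian $L_\sigma(y,z;x)=f_1(y)+f_2(z)+\langle x,B_1y+B_2z-c\rangle+\frac{\sigma}{2}\|B_1y+B_2z-c\|^2$. Assume $\partial f_1+\sigma B_1^*B_1$ and $\partial f_2+\sigma B_2^*B_2$ are maximal and strongly monotone. Let $(y^0,z^0,x^0)\in\operatorname{dom}f_1\times\operatorname{dom}f_2\times\mathbb{X}$. Algorithm I (HPR without proximal terms): set $\tilde x^0=x^0$ and for $k\ge0$: $z^{k+1}=\arg\min_z L_\sigma(y^k,z;\tilde x^k)$; $x^{k+1/2}=\tilde x^k+\sigma(B_1y^k+B_2z^{k+1}-c)$; $y^{k+1}=\arg\min_y L_\sigma(y,z^{k+1};x^{k+1/2})$; $x^{k+1}=x^{k+1/2}+\sigma(B_1y^{k+1}+B_2z^{k+1}-c)$; $\tilde x^{k+1}=\frac{1}{k+2}\tilde x^0+\frac{k+1}{k+2}x^{k+1}+\frac{\sigma}{k+2}(B_1y^0-B_1y^{k+1})$. Algorithm II (Halpern accelerated pADMM without proximal terms): with $w^0=(y^0,z^0,x^0)$ and for $k\ge0$: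 $\bar z^{k+1}=\arg\min_z L_\sigma(y^k,z;x^k)$; $\bar x^{k+1}=x^k+\sigma(B_1y^k+B_2\bar z^{k+1}-c)$; $\bar y^{k+1}=\arg\min_y L_\sigma(y,\bar z^{k+1};\bar x^{k+1})$; $\hat w^{k+1}=2\bar w^{k+1}-w^k$; $w^{k+1}=\frac{1}{k+2}w^0+\frac{k+1}{k+2}\hat w^{k+1}$, where $w^k=(y^k,z^k,x^k)$ and $\bar w^{k+1}=(\bar y^{k+1},\bar z^{k+1},\bar x^{k+1})$. Then all subproblems in both algorithms have unique solutions, and for every $k\ge0$, $(y^{k+1},z^{k+1},x^{k+1/2})$ (from Algorithm I) equals $(\bar y^{k+1},\bar z^{k+1},\bar x^{k+1})$ (from Algorithm II), both started from the same $(y^0,x^0)$. *)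

theory Defs
  imports "HOL-Analysis.Analysis" "HOL-Library.Extended_Real"
begin

definition proper_fun :: "('a \<Rightarrow> ereal) \<Rightarrow> bool" where
  "proper_fun f \<longleftrightarrow> (\<forall>x. f x \<noteq> -\<infinity>) \<and> (\<exists>x. f x \<noteq> \<infinity>)"

definition epigraph :: "('a \<Rightarrow> ereal) \<Rightarrow> ('a \<times> real) set" where
  "epigraph f = {(x, t). f x \<le> ereal t}"

definition convex_fun :: "('a::real_vector \<Rightarrow> ereal) \<Rightarrow> bool" where
  "convex_fun f \<longleftrightarrow> convex (epigraph f)"

definition closed_fun :: "('a::topological_space \<Rightarrow> ereal) \<Rightarrow> bool" where
  "closed_fun f \<longleftrightarrow> closed (epigraph f)"

definition effdom :: "('a \<Rightarrow> ereal) \<Rightarrow> 'a set" where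
  "effdom f = {x. f x < \<infinity>}"

definition subdiff :: "('a::real_inner \<Rightarrow> ereal) \<Rightarrow> 'a \<Rightarrow> 'a set" where
  "subdiff f x = {g. f x \<noteq> \<infinity> \<and> (\<forall>u. f u \<ge> f x + ereal (g \<bullet> (u - x)))}"

definition monotone_op :: "('a::real_inner \<Rightarrow> 'a set) \<Rightarrow> bool" where
  "monotone_op T \<longleftrightarrow> (\<forall>u v g h. g \<in> T u \<longrightarrow> h \<in> T v \<longrightarrow> (g - h) \<bullet> (u - v) \<ge> 0)"

definition maximal_monotone :: "('a::real_inner \<Rightarrow> 'a set) \<Rightarrow> bool" where
  "maximal_monotone T \<longleftrightarrow> monotone_op T \<and>
     (\<forall>S. monotone_op S \<and> (\<forall>u. T u \<subseteq> S u) \<longrightarrow> S = T)"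

definition strongly_monotone :: "('a::real_inner \<Rightarrow> 'a set) \<Rightarrow> bool" where
  "strongly_monotone T \<longleftrightarrow> (\<exists>\<mu>>0. \<forall>u v g h. g \<in> T u \<longrightarrow> h \<in> T v \<longrightarrow>
      (g - h) \<bullet> (u - v) \<ge> \<mu> * (norm (u - v))\<^sup>2)"

definition subdiff_plus_BB :: "('a::real_inner \<Rightarrow> ereal) \<Rightarrow> real \<Rightarrow> ('a \<Rightarrow> 'b::real_inner) \<Rightarrow> 'a \<Rightarrow> 'a set" where
  "subdiff_plus_BB f \<sigma> B y = (\<lambda>g. g + \<sigma> *\<^sub>R adjoint B (B y)) ` subdiff f y"

definition aug_lagr ::
  "('y \<Rightarrow> ereal) \<Rightarrow> ('z \<Rightarrow> ereal) \<Rightarrow> ('y \<Rightarrow> 'x::real_inner) \<Rightarrow> ('z \<Rightarrow> 'x) \<Rightarrow> 'x \<Rightarrow> real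
    \<Rightarrow> 'y \<Rightarrow> 'z \<Rightarrow> 'x \<Rightarrow> ereal" where
  "aug_lagr f1 f2 B1 B2 c \<sigma> y z x =
     f1 y + f2 z + ereal (x \<bullet> (B1 y + B2 z - c) + \<sigma> / 2 * (norm (B1 y + B2 z - c))\<^sup>2)"

text \<open>z-subproblem argmin_z L_\<sigma>(y,z;x): since f1(y) is a constant in z (possibly +\<infinity>
  for extrapolated iterates), it is dropped, as is standard.\<close>
definition is_zsub_min ::
  "('z \<Rightarrow> ereal) \<Rightarrow> ('y \<Rightarrow> 'x::real_inner) \<Rightarrow> ('z \<Rightarrow> 'x) \<Rightarrow> 'x \<Rightarrow> real \<Rightarrow> 'y \<Rightarrow> 'x \<Rightarrow> 'z \<Rightarrow> bool" where
  "is_zsub_min f2 B1 B2 c \<sigma> y x z \<longleftrightarrow>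
     (\<forall>z'. f2 z + ereal (x \<bullet> (B1 y + B2 z - c) + \<sigma> / 2 * (norm (B1 y + B2 z - c))\<^sup>2)
         \<le> f2 z' + ereal (x \<bullet> (B1 y + B2 z' - c) + \<sigma> / 2 * (norm (B1 y + B2 z' - c))\<^sup>2))"

text \<open>y-subproblem argmin_y L_\<sigma>(y,z;x), with the constant f2(z) dropped.\<close>
definition is_ysub_min ::
  "('y \<Rightarrow> ereal) \<Rightarrow> ('y \<Rightarrow> 'x::real_inner) \<Rightarrow> ('z \<Rightarrow> 'x) \<Rightarrow> 'x \<Rightarrow> real \<Rightarrow> 'z \<Rightarrow> 'x \<Rightarrow> 'y \<Rightarrow> bool" where
  "is_ysub_min f1 B1 B2 c \<sigma> z x y \<longleftrightarrow>
     (\<forall>y'. f1 y + ereal (x \<bullet> (B1 y + B2 z - c) + \<sigma> / 2 * (norm (B1 y + B2 z - c))\<^sup>2)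
         \<le> f1 y' + ereal (x \<bullet> (B1 y' + B2 z - c) + \<sigma> / 2 * (norm (B1 y' + B2 z - c))\<^sup>2))"

end

theory Submission
  imports Defs
begin

lemma convex_fun_ineq:
  fixes f :: "'a::real_vector \<Rightarrow> ereal"
  assumes "convex_fun f" "f a = ereal A" "f b = ereal B" "0 \<le> s" "s \<le> 1"
  shows "f ((1 - s) *\<^sub>R a + s *\<^sub>R b) \<le> ereal ((1 - s) * A + s * B)"
proof -
  have "(a, A) \<in> epigraph f" "(b, B) \<in> epigraph f" using assms by (auto simp: epigraph_def)
  then have "(1 - s) *\<^sub>R (a, A) + s *\<^sub>R (b, B) \<in> epigraph f"
    using assms convexD[of "epigraph f"] unfolding convex_fun_def by auto
  then show ?thesis by (simp add: epigraph_def)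
qed

lemma small_s:
  fixes E K :: real
  assumes "\<And>s. 0 < s \<Longrightarrow> s \<le> 1 \<Longrightarrow> 0 \<le> E + s * K"
  shows "0 \<le> E"
proof (rule ccontr)
  assume "\<not> 0 \<le> E"
  then have e: "E < 0" by simp
  show False
  proof (cases "K \<le> 0")
    case True
    then show False using assms[of 1] e by simp
  next
    case False
    define s where "s = min 1 (- E / (2 * K))"
    have "0 < - E / (2 * K)" using e False by (intro divide_pos_pos) auto
    then have "0 < s" "s \<le> 1" by (auto simp: s_def)
    moreover have "s * K \<le> - E / 2" using False e
      by (simp add: s_def min_def field_simps)
    ultimately show False using assms[of s] e by linarith
  qed
qed

lemma min_subgrad:
  fixes f :: "'a::real_inner \<Rightarrow> ereal"
  assumes cf: "convex_fun f" and fz: "f z = ereal a"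
    and mn: "\<And>u. f z + ereal (q z) \<le> f u + ereal (q u)"
    and exp: "\<And>d s. q (z + s *\<^sub>R d) = q z + s * (v \<bullet> d) + s\<^sup>2 * K d"
  shows "- v \<in> subdiff f z"
  unfolding subdiff_def
proof (intro CollectI conjI allI)
  show "f z \<noteq> \<infinity>" using fz by simp
  fix u
  show "f z + ereal (- v \<bullet> (u - z)) \<le> f u"
  proof (cases "f u = \<infinity>")
    case True then show ?thesis by simp
  next
    case False
    have "f u \<noteq> - \<infinity>"
    proof
      assume "f u = - \<infinity>"
      then show False using mn[of u] fz by simp
    qed
    with False obtain b where fu: "f u = ereal b" by (cases "f u") auto
    define d where "d = u - z"
    have "0 \<le> (b - a + v \<bullet> d) + s * K d" if s: "0 < s" "s \<le> 1" for s
    proof -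
      have eq: "(1 - s) *\<^sub>R z + s *\<^sub>R u = z + s *\<^sub>R d" by (simp add: d_def algebra_simps)
      have "f (z + s *\<^sub>R d) \<le> ereal ((1 - s) * a + s * b)"
        using convex_fun_ineq[OF cf fz fu, of s] s eq by simp
      then have "ereal (a + q z) \<le> ereal ((1 - s) * a + s * b + q (z + s *\<^sub>R d))"
        using mn[of "z + s *\<^sub>R d"] fz
        by (metis (no_types, lifting) add_right_mono order_trans plus_ereal.simps(1))
      then have "a + q z \<le> (1 - s) * a + s * b + q z + s * (v \<bullet> d) + s\<^sup>2 * K d"
        using exp by simp
      then have "0 \<le> s * ((b - a + v \<bullet> d) + s * K d)"
        by (simp add: algebra_simps power2_eq_square)
      then show ?thesis using s by (simp add: zero_le_mult_iff)
    qed
    then have "0 \<le> b - a + v \<bullet> d" by (rule small_s)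
    then show ?thesis using fz fu by (simp add: d_def inner_diff_right)
  qed
qed

lemma exists_min:
  fixes f :: "'a::euclidean_space \<Rightarrow> ereal" and h :: "'a \<Rightarrow> real"
  assumes cl: "closed_fun f" and fu0: "f u0 = ereal a0" and hc: "continuous_on UNIV h"
    and coerc: "\<And>z. norm z > R \<Longrightarrow> f u0 + ereal (h u0) < f z + ereal (h z)"
    and lb: "\<And>z. norm z \<le> R \<Longrightarrow> ereal L \<le> f z"
  shows "\<exists>zb. \<forall>z. f zb + ereal (h zb) \<le> f z + ereal (h z)"
proof -
  define M where "M = a0 + h u0"
  have u0R: "norm u0 \<le> R" using coerc[of u0] by force
  then have "u0 \<in> cball 0 R" by simp
  then obtain zm where zm: "zm \<in> cball 0 R" "\<And>z. z \<in> cball 0 R \<Longrightarrow> h zm \<le> h z"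
    using continuous_attains_inf[of "cball 0 R" h] hc continuous_on_subset
    by (metis compact_cball empty_iff subset_UNIV)
  define E where "E = epigraph f \<inter> (cball 0 R \<times> {L..M - h zm})"
  have "closed (epigraph f)" using cl by (simp add: closed_fun_def)
  then have cE: "compact E" unfolding E_def
    by (intro closed_Int_compact compact_Times compact_cball compact_Icc)
  have a0L: "L \<le> a0" using lb[OF u0R] fu0 by simp
  have u0E: "(u0, a0) \<in> E" using u0R a0L zm(2)[of u0] fu0
    by (auto simp: E_def epigraph_def M_def)
  have "continuous_on E (\<lambda>p. snd p + h (fst p))"
    by (intro continuous_intros continuous_on_compose2[OF hc]) auto
  then obtain p where pE: "p \<in> E" and pmin: "\<And>q. q \<in> E \<Longrightarrow> snd p + h (fst p) \<le> snd q + h (fst q)"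
    using continuous_attains_inf[OF cE] u0E by blast
  obtain zb tb where p: "p = (zb, tb)" by (cases p)
  have fzb: "f zb \<le> ereal tb" using pE p by (simp add: E_def epigraph_def)
  have le1: "f zb + ereal (h zb) \<le> ereal (tb + h zb)"
    using fzb by (metis add_right_mono plus_ereal.simps(1))
  have tbM: "tb + h zb \<le> M" using pmin[OF u0E] p by (simp add: M_def)
  show ?thesis
  proof (intro exI allI)
    fix z
    show "f zb + ereal (h zb) \<le> f z + ereal (h z)"
    proof (cases "norm z > R")
      case True
      then have "ereal M < f z + ereal (h z)" using coerc[of z] fu0 by (simp add: M_def)
      then show ?thesis using le1 tbM by (meson ereal_less_eq(3) less_imp_le order_trans)
    next
      case False
      then have zR: "norm z \<le> R" by simp
      show ?thesis
      proof (cases "f z = \<infinity>")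
        case True then show ?thesis by simp
      next
        case False
        moreover have "f z \<noteq> - \<infinity>" using lb[OF zR] by auto
        ultimately obtain t where ft: "f z = ereal t" by (cases "f z") auto
        have tL: "L \<le> t" using lb[OF zR] ft by simp
        show ?thesis
        proof (cases "t \<le> M - h zm")
          case True
          then have "(z, t) \<in> E" using zR tL ft by (auto simp: E_def epigraph_def)
          then have "tb + h zb \<le> t + h z" using pmin p by fastforce
          then show ?thesis using le1 ft by (metis ereal_less_eq(3) order_trans plus_ereal.simps(1))
        next
          case False
          have "h zm \<le> h z" using zm(2) zR by simp
          then have "tb + h zb \<le> t + h z" using False tbM by linarith
          then show ?thesis using le1 ft by (metis ereal_less_eq(3) order_trans plus_ereal.simps(1))
        qed
      qed
    qed
  qed
qed

lemma T_nonempty: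
  assumes "maximal_monotone T"
  shows "\<exists>u g. g \<in> T u"
proof (rule ccontr)
  assume "\<not> ?thesis"
  then have e: "\<And>u. T u = {}" by blast
  define S where "S = (\<lambda>u::'a. if u = 0 then {0::'a} else {})"
  have "monotone_op S" by (auto simp: monotone_op_def S_def split: if_splits)
  moreover have "\<forall>u. T u \<subseteq> S u" using e by simp
  ultimately have "S = T" using assms by (auto simp: maximal_monotone_def)
  then have "S 0 = T 0" by simp
  then show False using e[of 0] by (simp add: S_def)
qed

lemma max_ext:
  assumes mm: "maximal_monotone T"
    and h: "\<And>u g. g \<in> T u \<Longrightarrow> 0 \<le> (g - w) \<bullet> (u - z)"
  shows "w \<in> T z"
proof -
  define S where "S = T(z := insert w (T z))"
  have mT: "monotone_op T" using mm by (simp add: maximal_monotone_def)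
  have "monotone_op S"
    unfolding monotone_op_def
  proof (intro allI impI)
    fix u v g k assume g: "g \<in> S u" and k: "k \<in> S v"
    show "0 \<le> (g - k) \<bullet> (u - v)"
    proof (cases "u = z \<and> g = w")
      case True
      show ?thesis
      proof (cases "v = z \<and> k = w")
        case True with \<open>u = z \<and> g = w\<close> show ?thesis by simp
      next
        case False
        then have "k \<in> T v" using k by (auto simp: S_def split: if_splits)
        then have "0 \<le> (k - w) \<bullet> (v - z)" by (rule h)
        then show ?thesis using True by (metis inner_minus_left inner_minus_right minus_diff_eq minus_minus)
      qed
    next
      case False
      then have gT: "g \<in> T u" using g by (auto simp: S_def split: if_splits)
      show ?thesis
      proof (cases "v = z \<and> k = w")
        case True
        then show ?thesis using h[OF gT] by simp
      next
        case False
        then have "k \<in> T v" using k by (auto simp: S_def split: if_splits)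
        then show ?thesis using mT gT by (simp add: monotone_op_def)
      qed
    qed
  qed
  moreover have "\<forall>u. T u \<subseteq> S u" by (auto simp: S_def)
  ultimately have "S = T" using mm by (auto simp: maximal_monotone_def)
  then have "S z = T z" by simp
  moreover have "w \<in> S z" by (simp add: S_def)
  ultimately show ?thesis by simp
qed

lemma coerc_real:
  fixes l a0 S U W M r :: real
  assumes l: "0 < l" and SUW: "0 \<le> S" "0 \<le> U" "0 \<le> W"
    and r: "r > max 1 (2 / l * (\<bar>a0\<bar> + S * U + \<bar>M\<bar> + S + W + 1))"
  shows "M < a0 - S * (r + U) - W * r + l / 2 * r\<^sup>2"
proof -
  define C where "C = \<bar>a0\<bar> + S * U + \<bar>M\<bar> + S + W + 1"
  have r1: "1 \<le> r" using r by simp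
  have "2 / l * C < r" using r by (simp add: C_def)
  then have "C \<le> l / 2 * r" using l by (simp add: field_simps)
  then have "C * r \<le> l / 2 * r * r" using r1 by (intro mult_right_mono) auto
  moreover have "(\<bar>a0\<bar> + S * U + \<bar>M\<bar> + 1) * 1 \<le> (\<bar>a0\<bar> + S * U + \<bar>M\<bar> + 1) * r"
    using r1 SUW by (intro mult_left_mono) auto
  moreover have "C * r = (\<bar>a0\<bar> + S * U + \<bar>M\<bar> + 1) * r + (S + W) * r" by (simp add: C_def algebra_simps)
  ultimately show ?thesis by (simp add: power2_eq_square algebra_simps)
qed

lemma reg_sol:
  fixes f :: "'a::euclidean_space \<Rightarrow> ereal" and B :: "'a \<Rightarrow> 'b::euclidean_space"
  assumes pf: "proper_fun f" and cf: "convex_fun f" and clf: "closed_fun f" and lin: "linear B"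
    and sig: "\<sigma> > 0" and mm: "maximal_monotone (subdiff_plus_BB f \<sigma> B)" and l: "0 < l"
  shows "\<exists>z. w - l *\<^sub>R z \<in> subdiff_plus_BB f \<sigma> B z"
proof -
  obtain u0 g0 where "g0 \<in> subdiff_plus_BB f \<sigma> B u0" using T_nonempty[OF mm] by blast
  then obtain s0 where s0: "s0 \<in> subdiff f u0" unfolding subdiff_plus_BB_def by blast
  have ninf: "\<And>x. f x \<noteq> - \<infinity>" using pf by (simp add: proper_fun_def)
  have "f u0 \<noteq> \<infinity>" using s0 by (simp add: subdiff_def)
  then obtain a0 where fu0: "f u0 = ereal a0" using ninf[of u0] by (cases "f u0") auto
  have flow: "ereal (a0 + s0 \<bullet> (z - u0)) \<le> f z" for z
    using s0 fu0 by (simp add: subdiff_def)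
  have flow2: "a0 - norm s0 * (norm z + norm u0) \<le> a0 + s0 \<bullet> (z - u0)" for z
  proof -
    have "- (s0 \<bullet> (z - u0)) \<le> norm s0 * norm (z - u0)"
      by (metis Cauchy_Schwarz_ineq2 abs_le_D2)
    moreover have "norm (z - u0) \<le> norm z + norm u0" by (rule norm_triangle_ineq4)
    then have "norm s0 * norm (z - u0) \<le> norm s0 * (norm z + norm u0)" by (simp add: mult_left_mono)
    ultimately show ?thesis by linarith
  qed
  define h where "h z = \<sigma> / 2 * (norm (B z))\<^sup>2 - w \<bullet> z + l / 2 * (norm z)\<^sup>2" for z
  have hlow: "- norm w * norm z + l / 2 * (norm z)\<^sup>2 \<le> h z" for z
  proof -
    have "w \<bullet> z \<le> norm w * norm z" by (rule norm_cauchy_schwarz)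
    moreover have "0 \<le> \<sigma> / 2 * (norm (B z))\<^sup>2" using sig by simp
    ultimately show ?thesis by (simp add: h_def)
  qed
  have Bc: "continuous_on UNIV B"
    using lin by (simp add: linear_continuous_on linear_conv_bounded_linear)
  have hc: "continuous_on UNIV h" unfolding h_def
    by (intro continuous_intros continuous_on_compose2[OF Bc]) auto
  define M where "M = a0 + h u0"
  define R where "R = max 1 (2 / l * (\<bar>a0\<bar> + norm s0 * norm u0 + \<bar>M\<bar> + norm s0 + norm w + 1))"
  have coerc: "f u0 + ereal (h u0) < f z + ereal (h z)" if z: "norm z > R" for z
  proof -
    have "M < a0 - norm s0 * (norm z + norm u0) - norm w * norm z + l / 2 * (norm z)\<^sup>2"
      using coerc_real[OF l _ _ _ z[unfolded R_def]] by simp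
    also have "\<dots> \<le> a0 + s0 \<bullet> (z - u0) + h z" using flow2[of z] hlow[of z] by linarith
    finally have "ereal M < ereal (a0 + s0 \<bullet> (z - u0)) + ereal (h z)" by simp
    also have "\<dots> \<le> f z + ereal (h z)" using flow[of z] by (rule add_right_mono)
    finally show ?thesis using fu0 by (simp add: M_def)
  qed
  have lb: "ereal (a0 - norm s0 * (R + norm u0)) \<le> f z" if "norm z \<le> R" for z
  proof -
    have "norm s0 * (norm z + norm u0) \<le> norm s0 * (R + norm u0)" using that by (simp add: mult_left_mono)
    then have "a0 - norm s0 * (R + norm u0) \<le> a0 + s0 \<bullet> (z - u0)" using flow2[of z] by linarith
    then show ?thesis using flow[of z] by (meson ereal_less_eq(3) order_trans)
  qed
  obtain zb where zb: "\<And>z. f zb + ereal (h zb) \<le> f z + ereal (h z)"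
    using exists_min[OF clf fu0 hc coerc lb] by blast
  have "f zb \<noteq> \<infinity>" using zb[of u0] fu0 by auto
  then obtain a where fzb: "f zb = ereal a" using ninf[of zb] by (cases "f zb") auto
  define v where "v = \<sigma> *\<^sub>R adjoint B (B zb) - w + l *\<^sub>R zb"
  define K where "K d = \<sigma> / 2 * (norm (B d))\<^sup>2 + l / 2 * (norm d)\<^sup>2" for d
  have exp: "h (zb + s *\<^sub>R d) = h zb + s * (v \<bullet> d) + s\<^sup>2 * K d" for d s
  proof -
    have adj: "adjoint B (B zb) \<bullet> d = B zb \<bullet> B d"
      using adjoint_works[OF lin, of d "B zb"] by (simp add: inner_commute)
    have n2: "(norm (a + s *\<^sub>R b))\<^sup>2 = (norm a)\<^sup>2 + 2 * s * (a \<bullet> b) + s\<^sup>2 * (norm b)\<^sup>2"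
      for a b :: "'c::real_inner"
      unfolding power2_norm_eq_inner
      by (simp add: inner_add_left inner_add_right inner_commute algebra_simps power2_eq_square)
    have Bs: "B (zb + s *\<^sub>R d) = B zb + s *\<^sub>R B d" by (simp add: linear_add[OF lin] linear_scale[OF lin])
    have e1: "(norm (B (zb + s *\<^sub>R d)))\<^sup>2 = (norm (B zb))\<^sup>2 + 2 * s * (B zb \<bullet> B d) + s\<^sup>2 * (norm (B d))\<^sup>2"
      unfolding Bs by (rule n2)
    have e2: "(norm (zb + s *\<^sub>R d))\<^sup>2 = (norm zb)\<^sup>2 + 2 * s * (zb \<bullet> d) + s\<^sup>2 * (norm d)\<^sup>2"
      by (rule n2)
    have e3: "w \<bullet> (zb + s *\<^sub>R d) = w \<bullet> zb + s * (w \<bullet> d)" by (simp add: inner_add_right)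
    have e4: "v \<bullet> d = \<sigma> * (B zb \<bullet> B d) - w \<bullet> d + l * (zb \<bullet> d)"
      unfolding v_def by (simp only: inner_diff_left inner_add_left inner_scaleR_left adj)
    show ?thesis
      unfolding h_def K_def e1 e2 e3 e4 by (simp add: algebra_simps)
  qed
  have "- v \<in> subdiff f zb" using min_subgrad[OF cf fzb zb exp] .
  then have "- v + \<sigma> *\<^sub>R adjoint B (B zb) \<in> subdiff_plus_BB f \<sigma> B zb"
    unfolding subdiff_plus_BB_def by blast
  moreover have "- v + \<sigma> *\<^sub>R adjoint B (B zb) = w - l *\<^sub>R zb" by (simp add: v_def)
  ultimately show ?thesis by auto
qed

lemma surj_T:
  fixes f :: "'a::euclidean_space \<Rightarrow> ereal" and B :: "'a \<Rightarrow> 'b::euclidean_space"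
  assumes pf: "proper_fun f" and cf: "convex_fun f" and clf: "closed_fun f" and lin: "linear B"
    and sig: "\<sigma> > 0" and mm: "maximal_monotone (subdiff_plus_BB f \<sigma> B)"
    and sm: "strongly_monotone (subdiff_plus_BB f \<sigma> B)"
  shows "\<exists>z. w \<in> subdiff_plus_BB f \<sigma> B z"
proof -
  let ?T = "subdiff_plus_BB f \<sigma> B"
  obtain \<mu> where mu: "\<mu> > 0" and smu: "\<And>u v g h. g \<in> ?T u \<Longrightarrow> h \<in> ?T v \<Longrightarrow>
      \<mu> * (norm (u - v))\<^sup>2 \<le> (g - h) \<bullet> (u - v)"
    using sm unfolding strongly_monotone_def by blast
  have mono: "\<And>u v g h. g \<in> ?T u \<Longrightarrow> h \<in> ?T v \<Longrightarrow> 0 \<le> (g - h) \<bullet> (u - v)"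
    using mm unfolding maximal_monotone_def monotone_op_def by blast
  obtain u0 g0 where g0: "g0 \<in> ?T u0" using T_nonempty[OF mm] by blast
  define lam where "lam n = inverse (real (Suc n))" for n
  have lam: "0 < lam n" "lam n \<le> 1" for n by (auto simp: lam_def field_simps)
  have "\<forall>n. \<exists>z. w - lam n *\<^sub>R z \<in> ?T z" using reg_sol[OF pf cf clf lin sig mm lam(1)] by blast
  then obtain zs where zs: "\<And>n. w - lam n *\<^sub>R zs n \<in> ?T (zs n)" by metis
  define C where "C = norm (w - g0) + norm u0"
  have bd: "norm (zs n - u0) \<le> C / \<mu>" for n
  proof -
    define d where "d = zs n - u0"
    define L where "L = lam n"
    have "\<mu> * (norm d)\<^sup>2 \<le> (w - L *\<^sub>R zs n - g0) \<bullet> d"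
      using smu[OF zs[of n] g0] by (simp add: d_def L_def)
    also have "(w - L *\<^sub>R zs n - g0) \<bullet> d = (w - g0 - L *\<^sub>R u0) \<bullet> d - L * (d \<bullet> d)"
      by (simp add: d_def algebra_simps inner_diff_left inner_diff_right)
    also have "\<dots> \<le> (w - g0 - L *\<^sub>R u0) \<bullet> d"
      using lam[of n] by (simp add: L_def)
    also have "\<dots> \<le> norm (w - g0 - L *\<^sub>R u0) * norm d" by (rule norm_cauchy_schwarz)
    also have "\<dots> \<le> C * norm d"
    proof (rule mult_right_mono)
      have "norm (w - g0 - L *\<^sub>R u0) \<le> norm (w - g0) + norm (L *\<^sub>R u0)" by (rule norm_triangle_ineq4)
      moreover have "norm (L *\<^sub>R u0) \<le> norm u0"
        using lam[of n] by (simp add: L_def mult_left_le_one_le)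
      ultimately show "norm (w - g0 - L *\<^sub>R u0) \<le> C" by (simp add: C_def)
    qed simp
    finally have "\<mu> * (norm d)\<^sup>2 \<le> C * norm d" .
    then have "\<mu> * norm d \<le> C \<or> norm d = 0" by (auto simp: power2_eq_square)
    moreover have "0 \<le> C" by (simp add: C_def)
    ultimately have "norm d \<le> C / \<mu>" using mu by (auto simp: field_simps)
    then show ?thesis by (simp add: d_def)
  qed
  have "bounded (range zs)"
    unfolding bounded_iff
  proof (intro exI ballI)
    fix x assume "x \<in> range zs"
    then obtain n where x: "x = zs n" by blast
    have "norm (zs n) \<le> norm (zs n - u0) + norm u0" by (metis norm_triangle_sub add.commute)
    then show "norm x \<le> C / \<mu> + norm u0" unfolding x using bd[of n] by linarith
  qed
  then obtain zl r where r: "strict_mono (r::nat \<Rightarrow> nat)" and lim: "(zs \<circ> r) \<longlonglongrightarrow> zl"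
    using bounded_imp_convergent_subsequence by blast
  have laml: "(lam \<circ> r) \<longlonglongrightarrow> 0"
    using LIMSEQ_subseq_LIMSEQ[OF LIMSEQ_inverse_real_of_nat r] by (simp add: lam_def comp_def)
  have "w \<in> ?T zl"
  proof (rule max_ext[OF mm])
    fix u g assume g: "g \<in> ?T u"
    let ?X = "\<lambda>n. (g - (w - (lam \<circ> r) n *\<^sub>R (zs \<circ> r) n)) \<bullet> (u - (zs \<circ> r) n)"
    have "?X \<longlonglongrightarrow> (g - (w - 0 *\<^sub>R zl)) \<bullet> (u - zl)"
      by (intro tendsto_intros laml lim)
    moreover have "\<forall>n\<ge>0. 0 \<le> ?X n" using mono[OF g zs] by simp
    ultimately have "0 \<le> (g - (w - 0 *\<^sub>R zl)) \<bullet> (u - zl)"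
      by (intro LIMSEQ_le_const) auto
    then show "0 \<le> (g - w) \<bullet> (u - zl)" by simp
  qed
  then show ?thesis by blast
qed

lemma sub_unique:
  fixes f :: "'a::euclidean_space \<Rightarrow> ereal" and B :: "'a \<Rightarrow> 'b::euclidean_space"
  assumes pf: "proper_fun f" and cf: "convex_fun f" and clf: "closed_fun f" and lin: "linear B"
    and sig: "\<sigma> > 0" and mm: "maximal_monotone (subdiff_plus_BB f \<sigma> B)"
    and sm: "strongly_monotone (subdiff_plus_BB f \<sigma> B)"
  shows "\<exists>!v. \<forall>v'. f v + ereal (x \<bullet> (B v + e) + \<sigma> / 2 * (norm (B v + e))\<^sup>2)
                 \<le> f v' + ereal (x \<bullet> (B v' + e) + \<sigma> / 2 * (norm (B v' + e))\<^sup>2)"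
proof -
  let ?T = "subdiff_plus_BB f \<sigma> B"
  define A where "A v = x \<bullet> (B v + e) + \<sigma> / 2 * (norm (B v + e))\<^sup>2" for v
  define t where "t = - adjoint B (x + \<sigma> *\<^sub>R e)"
  obtain zs where "t \<in> ?T zs" using surj_T[OF pf cf clf lin sig mm sm] by blast
  then obtain gs where gs: "gs \<in> subdiff f zs" and tgs: "t = gs + \<sigma> *\<^sub>R adjoint B (B zs)"
    unfolding subdiff_plus_BB_def by blast
  have ninf: "\<And>x. f x \<noteq> - \<infinity>" using pf by (simp add: proper_fun_def)
  have "f zs \<noteq> \<infinity>" using gs by (simp add: subdiff_def)
  then obtain a where fzs: "f zs = ereal a" using ninf[of zs] by (cases "f zs") auto
  have sub: "ereal (a + gs \<bullet> (u - zs)) \<le> f u" for u using gs fzs by (simp add: subdiff_def)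
  define rs where "rs = B zs + e"
  have gsd: "gs \<bullet> d = - ((x + \<sigma> *\<^sub>R rs) \<bullet> B d)" for d
  proof -
    have "gs = t - \<sigma> *\<^sub>R adjoint B (B zs)" using tgs by simp
    then have "gs \<bullet> d = - (d \<bullet> adjoint B (x + \<sigma> *\<^sub>R e)) - \<sigma> * (d \<bullet> adjoint B (B zs))"
      by (simp add: t_def inner_diff_left inner_diff_right inner_commute)
    also have "\<dots> = - (B d \<bullet> (x + \<sigma> *\<^sub>R e)) - \<sigma> * (B d \<bullet> B zs)"
      by (simp add: adjoint_works[OF lin])
    also have "\<dots> = - ((x + \<sigma> *\<^sub>R rs) \<bullet> B d)"
      by (simp add: rs_def inner_add_left inner_add_right inner_commute algebra_simps)
    finally show ?thesis .
  qed
  have Aexp: "A v = A zs + (x + \<sigma> *\<^sub>R rs) \<bullet> B (v - zs) + \<sigma> / 2 * (norm (B (v - zs)))\<^sup>2" for v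
  proof -
    have Bv: "B v + e = rs + B (v - zs)" by (simp add: rs_def linear_diff[OF lin])
    have n2: "(norm (rs + p))\<^sup>2 = (norm rs)\<^sup>2 + 2 * (rs \<bullet> p) + (norm p)\<^sup>2" for p
      unfolding power2_norm_eq_inner
      by (simp add: inner_add_left inner_add_right inner_commute)
    show ?thesis unfolding A_def Bv
      unfolding rs_def[symmetric] n2
      by (simp add: inner_add_left inner_add_right algebra_simps)
  qed
  have key: "ereal (a + A zs + \<sigma> / 2 * (norm (B (v - zs)))\<^sup>2) \<le> f v + ereal (A v)" for v
  proof (cases "f v")
    case (real b)
    have "a + gs \<bullet> (v - zs) \<le> b" using sub[of v] real by simp
    then show ?thesis using real gsd[of "v - zs"] Aexp[of v] by simp
  qed (use ninf in auto)
  have minzs: "f zs + ereal (A zs) \<le> f v + ereal (A v)" for v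
  proof -
    have "ereal (a + A zs) \<le> ereal (a + A zs + \<sigma> / 2 * (norm (B (v - zs)))\<^sup>2)" using sig by simp
    then show ?thesis using key[of v] fzs by (metis order_trans plus_ereal.simps(1))
  qed
  obtain \<mu> where mu: "\<mu> > 0" and smu: "\<And>u v g h. g \<in> ?T u \<Longrightarrow> h \<in> ?T v \<Longrightarrow>
      \<mu> * (norm (u - v))\<^sup>2 \<le> (g - h) \<bullet> (u - v)"
    using sm unfolding strongly_monotone_def by blast
  have uniq: "v = zs" if vmin: "\<forall>v'. f v + ereal (A v) \<le> f v' + ereal (A v')" for v
  proof -
    have le: "f v + ereal (A v) \<le> ereal (a + A zs)" using vmin fzs by (metis plus_ereal.simps(1))
    have "f v \<noteq> \<infinity>" using le by auto
    then obtain b where fv: "f v = ereal b" using ninf[of v] by (cases "f v") auto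
    have b1: "b + A v \<le> a + A zs" using le fv by simp
    have b2: "a + gs \<bullet> (v - zs) \<le> b" using sub[of v] fv by simp
    have "\<sigma> / 2 * (norm (B (v - zs)))\<^sup>2 \<le> 0"
      using b1 b2 gsd[of "v - zs"] Aexp[of v] by simp
    then have "(norm (B (v - zs)))\<^sup>2 \<le> 0" using sig by (simp add: mult_le_0_iff)
    then have Bd: "B (v - zs) = 0" by simp
    then have gs0: "gs \<bullet> (v - zs) = 0" using gsd[of "v - zs"] by simp
    have BvBz: "B v = B zs" using Bd by (simp add: linear_diff[OF lin])
    have ab: "b = a" using b1 b2 gs0 Aexp[of v] Bd by simp
    have "gs \<in> subdiff f v"
      unfolding subdiff_def
    proof (intro CollectI conjI allI)
      show "f v \<noteq> \<infinity>" using fv by simp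
      fix u
      have "gs \<bullet> (u - zs) = gs \<bullet> (u - v) + gs \<bullet> (v - zs)" by (simp add: inner_diff_right)
      then show "f v + ereal (gs \<bullet> (u - v)) \<le> f u" using sub[of u] fv ab gs0 by simp
    qed
    then have "t \<in> ?T v" unfolding subdiff_plus_BB_def tgs BvBz by blast
    from smu[OF this \<open>t \<in> ?T zs\<close>] have "\<mu> * (norm (v - zs))\<^sup>2 \<le> 0" by simp
    then have "(norm (v - zs))\<^sup>2 \<le> 0" using mu by (simp add: mult_le_0_iff)
    then show ?thesis by simp
  qed
  show ?thesis
    unfolding A_def[symmetric]
    using minzs uniq by blast
qed

lemma ereal_shift:
  "(p + ereal (a + K) \<le> q + ereal (b + K)) = (p + ereal a \<le> q + ereal b)"
  by (cases p; cases q) auto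

lemma A_expand:
  fixes B1 :: "'y \<Rightarrow> 'x::real_inner" and B2 :: "'z \<Rightarrow> 'x"
  shows "x \<bullet> (B1 y + B2 z - c) + \<sigma> / 2 * (norm (B1 y + B2 z - c))\<^sup>2
    = (x \<bullet> (B1 y - c) + \<sigma> / 2 * (norm (B1 y - c))\<^sup>2) + (x + \<sigma> *\<^sub>R B1 y - \<sigma> *\<^sub>R c) \<bullet> B2 z
      + \<sigma> / 2 * (norm (B2 z))\<^sup>2"
proof -
  have e: "B1 y + B2 z - c = (B1 y - c) + B2 z" by (simp add: algebra_simps)
  have n2: "(norm (r + p))\<^sup>2 = (norm r)\<^sup>2 + 2 * (r \<bullet> p) + (norm p)\<^sup>2" for r p :: 'x
    unfolding power2_norm_eq_inner
    by (simp add: inner_add_left inner_add_right inner_commute)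
  show ?thesis unfolding e n2
    by (simp add: inner_add_left inner_add_right inner_diff_left algebra_simps)
qed

lemma zsub_shift:
  fixes P :: "'y \<Rightarrow> 'x::real_inner" and Q :: "'z \<Rightarrow> 'x"
  assumes "x + \<sigma> *\<^sub>R P y = x' + \<sigma> *\<^sub>R P y'"
  shows "is_zsub_min g P Q c \<sigma> y x z \<longleftrightarrow> is_zsub_min g P Q c \<sigma> y' x' z"
proof -
  define K where "K = (x \<bullet> (P y - c) + \<sigma> / 2 * (norm (P y - c))\<^sup>2)"
  define K' where "K' = (x' \<bullet> (P y' - c) + \<sigma> / 2 * (norm (P y' - c))\<^sup>2)"
  define G where "G z = (x + \<sigma> *\<^sub>R P y - \<sigma> *\<^sub>R c) \<bullet> Q z + \<sigma> / 2 * (norm (Q z))\<^sup>2" for z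
  have e1: "x \<bullet> (P y + Q z - c) + \<sigma> / 2 * (norm (P y + Q z - c))\<^sup>2 = G z + K" for z
    unfolding A_expand G_def K_def by simp
  have e2: "x' \<bullet> (P y' + Q z - c) + \<sigma> / 2 * (norm (P y' + Q z - c))\<^sup>2 = G z + K'" for z
    unfolding A_expand G_def K'_def using assms by (simp add: algebra_simps)
  show ?thesis unfolding is_zsub_min_def e1 e2 ereal_shift ..
qed

theorem propositionA1:
  fixes f1 :: "'y::euclidean_space \<Rightarrow> ereal" and f2 :: "'z::euclidean_space \<Rightarrow> ereal"
    and B1 :: "'y \<Rightarrow> 'x::euclidean_space" and B2 :: "'z \<Rightarrow> 'x"
    and c :: 'x and \<sigma> :: real
    and y0 :: 'y and z0 :: 'z and x0 :: 'x
    and y z :: "nat \<Rightarrow> _" and xh x xt :: "nat \<Rightarrow> 'x"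
    and yb yw :: "nat \<Rightarrow> 'y" and zb zw :: "nat \<Rightarrow> 'z" and xb xw :: "nat \<Rightarrow> 'x"
  assumes f1: "proper_fun f1" "convex_fun f1" "closed_fun f1"
    and f2: "proper_fun f2" "convex_fun f2" "closed_fun f2"
    and lin: "linear B1" "linear B2"
    and sig: "\<sigma> > 0"
    and T1: "maximal_monotone (subdiff_plus_BB f1 \<sigma> B1)" "strongly_monotone (subdiff_plus_BB f1 \<sigma> B1)"
    and T2: "maximal_monotone (subdiff_plus_BB f2 \<sigma> B2)" "strongly_monotone (subdiff_plus_BB f2 \<sigma> B2)"
    and init: "y0 \<in> effdom f1" "z0 \<in> effdom f2"
    \<comment> \<open>Algorithm I (HPR without proximal terms); xh k stands for x^{k+1/2}\<close>
    and I0: "y 0 = y0" "z 0 = z0" "x 0 = x0" "xt 0 = x0"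
    and Iz: "\<And>k. is_zsub_min f2 B1 B2 c \<sigma> (y k) (xt k) (z (Suc k))"
    and Ixh: "\<And>k. xh k = xt k + \<sigma> *\<^sub>R (B1 (y k) + B2 (z (Suc k)) - c)"
    and Iy: "\<And>k. is_ysub_min f1 B1 B2 c \<sigma> (z (Suc k)) (xh k) (y (Suc k))"
    and Ix: "\<And>k. x (Suc k) = xh k + \<sigma> *\<^sub>R (B1 (y (Suc k)) + B2 (z (Suc k)) - c)"
    and Ixt: "\<And>k. xt (Suc k) = (1 / (real k + 2)) *\<^sub>R xt 0 + ((real k + 1) / (real k + 2)) *\<^sub>R x (Suc k)
                 + (\<sigma> / (real k + 2)) *\<^sub>R (B1 (y 0) - B1 (y (Suc k)))"
    \<comment> \<open>Algorithm II (Halpern accelerated pADMM without proximal terms)\<close>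
    and II0: "yw 0 = y0" "zw 0 = z0" "xw 0 = x0"
    and IIz: "\<And>k. is_zsub_min f2 B1 B2 c \<sigma> (yw k) (xw k) (zb (Suc k))"
    and IIx: "\<And>k. xb (Suc k) = xw k + \<sigma> *\<^sub>R (B1 (yw k) + B2 (zb (Suc k)) - c)"
    and IIy: "\<And>k. is_ysub_min f1 B1 B2 c \<sigma> (zb (Suc k)) (xb (Suc k)) (yb (Suc k))"
    and IIw: "\<And>k. yw (Suc k) = (1 / (real k + 2)) *\<^sub>R yw 0 + ((real k + 1) / (real k + 2)) *\<^sub>R (2 *\<^sub>R yb (Suc k) - yw k)"
             "\<And>k. zw (Suc k) = (1 / (real k + 2)) *\<^sub>R zw 0 + ((real k + 1) / (real k + 2)) *\<^sub>R (2 *\<^sub>R zb (Suc k) - zw k)"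
             "\<And>k. xw (Suc k) = (1 / (real k + 2)) *\<^sub>R xw 0 + ((real k + 1) / (real k + 2)) *\<^sub>R (2 *\<^sub>R xb (Suc k) - xw k)"
  shows "(\<forall>yy xx. \<exists>!zz. is_zsub_min f2 B1 B2 c \<sigma> yy xx zz)
       \<and> (\<forall>zz xx. \<exists>!yy. is_ysub_min f1 B1 B2 c \<sigma> zz xx yy)
       \<and> (\<forall>k. y (Suc k) = yb (Suc k) \<and> z (Suc k) = zb (Suc k) \<and> xh k = xb (Suc k))"
proof -
  have Zu: "\<forall>yy xx. \<exists>!zz. is_zsub_min f2 B1 B2 c \<sigma> yy xx zz"
  proof (intro allI)
    fix yy xx
    have e: "\<And>zz. B1 yy + B2 zz - c = B2 zz + (B1 yy - c)" by (simp add: algebra_simps)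
    show "\<exists>!zz. is_zsub_min f2 B1 B2 c \<sigma> yy xx zz"
      unfolding is_zsub_min_def e
      by (rule sub_unique[OF f2 lin(2) sig T2])
  qed
  have Yu: "\<forall>zz xx. \<exists>!yy. is_ysub_min f1 B1 B2 c \<sigma> zz xx yy"
  proof (intro allI)
    fix zz xx
    have e: "\<And>yy. B1 yy + B2 zz - c = B1 yy + (B2 zz - c)" by (simp add: algebra_simps)
    show "\<exists>!yy. is_ysub_min f1 B1 B2 c \<sigma> zz xx yy"
      unfolding is_ysub_min_def e
      by (rule sub_unique[OF f1 lin(1) sig T1])
  qed
  define P where "P k \<longleftrightarrow> xt k + \<sigma> *\<^sub>R B1 (y k) = xw k + \<sigma> *\<^sub>R B1 (yw k)" for k
  have step: "z (Suc k) = zb (Suc k) \<and> xh k = xb (Suc k) \<and> y (Suc k) = yb (Suc k)" if Pk: "P k" for k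
  proof -
    have "is_zsub_min f2 B1 B2 c \<sigma> (yw k) (xw k) (z (Suc k))"
      using Iz[of k] zsub_shift[where x="xt k" and \<sigma>=\<sigma> and P=B1 and y="y k" and x'="xw k" and y'="yw k"
          and g=f2 and Q=B2 and c=c and z="z (Suc k)", OF Pk[unfolded P_def]] by blast
    then have Z: "z (Suc k) = zb (Suc k)" using Zu IIz[of k] by blast
    have XH: "xh k = xb (Suc k)"
    proof -
      have "xh k = (xt k + \<sigma> *\<^sub>R B1 (y k)) + \<sigma> *\<^sub>R (B2 (z (Suc k)) - c)"
        by (simp add: Ixh algebra_simps)
      also have "\<dots> = (xw k + \<sigma> *\<^sub>R B1 (yw k)) + \<sigma> *\<^sub>R (B2 (zb (Suc k)) - c)"
        using Pk Z by (simp add: P_def)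
      also have "\<dots> = xb (Suc k)" by (simp add: IIx algebra_simps)
      finally show ?thesis .
    qed
    have "y (Suc k) = yb (Suc k)" using Yu Iy[of k] IIy[of k] Z XH by metis
    with Z XH show ?thesis by blast
  qed
  have Pall: "P k" for k
  proof (induction k)
    case 0
    then show ?case by (simp add: P_def I0 II0)
  next
    case (Suc k)
    from step[OF Suc] have Z: "z (Suc k) = zb (Suc k)" and XH: "xh k = xb (Suc k)"
      and Y: "y (Suc k) = yb (Suc k)" by auto
    define p where "p = 1 / (real k + 2)"
    have q: "(real k + 1) / (real k + 2) = 1 - p" by (simp add: p_def field_simps)
    have sp: "\<sigma> / (real k + 2) = \<sigma> * p" by (simp add: p_def)
    have xhk: "xh k = xw k + \<sigma> *\<^sub>R B1 (yw k) + \<sigma> *\<^sub>R B2 (zb (Suc k)) - \<sigma> *\<^sub>R c"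
      using XH by (simp add: IIx algebra_simps)
    have B1yw: "B1 (yw (Suc k)) = p *\<^sub>R B1 y0 + (1 - p) *\<^sub>R (2 *\<^sub>R B1 (yb (Suc k)) - B1 (yw k))"
      unfolding IIw(1) q p_def[symmetric] II0
      by (simp add: linear_add[OF lin(1)] linear_diff[OF lin(1)] linear_scale[OF lin(1)])
    show ?case
      unfolding P_def Ixt[of k] B1yw IIw(3)[of k] q sp p_def[symmetric] Ix[of k] IIx[of k]
      unfolding xhk Z Y I0 II0 scaleR_2
      by (simp add: algebra_simps)
  qed
  show ?thesis using Zu Yu step Pall by blast
qed

end
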